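(* Let $n$ be the number of validators and $f\in[0,n]$. Suppose (A) the algorithm by which validators cast FFG-votes guarantees, for every validator following it: at most one FFG-vote is sent in any slot; the target $\mathcal{T}$ of the FFG-vote sent in slot $t$ has $\mathcal{T}.c=t$; and if $\mathcal{S},\mathcal{S}'$ are the sources of FFG-votes sent in slots $t\le t'$ then $\mathcal{S}\le\mathcal{S}'$; and (B) for every round $r$ and every validator $v_i$ honest in round $r$, the chain $\chi^{\mathrm{fin}}_i$ output by $v_i$ at round $r$ is a chain finalized according to the global view $\mathcal{V}^r_{\mathsf{G}}$ (the set of all messages sent up to round $r$). Then the finalized chain $\chi^{\mathrm{fin}}$ is $\frac{n}{3}$-accountable.
   Context: Validators $v_1,\dots,v_n$ exchange signed messages; time is divided into rounds grouped into slots. A validator is honest until it is (possibly) corrupted by the adversary, after which it may deviate arbitrarily; honest validators follow the protocol. Blocks are pairs $(b,p)$ with $p$ the slot; chains are identified with their last block, $\chi.p$ is the slot of the last block; genesis $B_{\text{genesis}}$ has slot $-1$; $\preceq$ is the prefix relation and chains conflict if neither is a prefix of the other. Checkpoints $\mathcal{C}=(\chi,c)$; FFG-vote $\mathcal{C}_1\to\mathcal{C}_2$ valid iff $\mathcal{C}_1.c<\mathcal{C}_2.c$ and $\mathcal{C}_1.\chi\preceq\mathcal{C}_2.\chi$; FFG-votes are carried inside VOTE messages. In a view (set of messages) $\mathcal{V}$: $\mathcal{C}$ is justified iff $\mathcal{C}=(B_{\text{genesis}},0)$ or there are VOTE messages in $\mathcal{V}$ from at least $\frac{2}{3}n$ distinct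 validators whose FFG-votes $\mathcal{S}\to\mathcal{T}$ are valid, with $\mathcal{S}$ justified in $\mathcal{V}$, $\mathcal{S}.\chi\preceq\mathcal{C}.\chi\preceq\mathcal{T}.\chi$, $\mathcal{T}.c=\mathcal{C}.c$; $\mathcal{C}$ is finalized iff $\mathcal{C}=(B_{\text{genesis}},0)$ or $\mathcal{C}$ is justified and there are VOTE messages in $\mathcal{V}$ from at least $\frac{2}{3}n$ distinct validators with valid FFG-votes $\mathcal{C}\to\mathcal{T}$, $\mathcal{T}.c=\mathcal{C}.c+1$. A chain is finalized according to $\mathcal{V}$ iff it is a prefix of the chain of a checkpoint finalized in $\mathcal{V}$. Preorder: $\mathcal{C}\le\mathcal{C}'$ iff $\mathcal{C}.c<\mathcal{C}'.c$ or ($\mathcal{C}.c=\mathcal{C}'.c$ and $\mathcal{C}.\chi.p\le\mathcal{C}'.\chi.p$); $<$ is its strict part. Slashing conditions for two distinct FFG-votes $\mathcal{C}_1\to\mathcal{C}_2$, $\mathcal{C}_3\to\mathcal{C}_4$ by the same validator: $\mathbf{E_1}$: $\mathcal{C}_2.c=\mathcal{C}_4.c$; $\mathbf{E_2}$: $\mathcal{C}_3<\mathcal{C}_1$ and $\mathcal{C}_2.c<\mathcal{C}_4.c$. Accountability: a protocol outputting chain $\chi^{\mathrm{fin}}$ is $f^{\mathrm{acc}}$-accountable if, whenever safety is violated (two validators, honest at rounds $r,r'$ respectively, output chains $\chi^{\mathrm{fin},r}_i$, $\chi^{\mathrm{fin},r'}_j$ that conflict), then, having access to all messages sent, it is possible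 to produce a proof identifying at least $f^{\mathrm{acc}}$ validators as protocol violators, and such a proof can never falsely accuse an honest validator that followed the protocol. *)

theory Defs
  imports Complex_Main "HOL-Library.Sublist"
begin

text \<open>A block is a pair (b,p) with p its slot; the genesis block has slot -1.
  A chain is identified with the sequence of blocks from genesis to its last block;
  (valid) chains start at genesis and slots strictly increase along the chain.\<close>

datatype 'b block = Genesis | Block 'b int

fun bslot :: "'b block \<Rightarrow> int" where
  "bslot Genesis = -1"
| "bslot (Block b p) = p"

definition valid_chain :: "'b block list \<Rightarrow> bool" where
  "valid_chain xs \<longleftrightarrow> xs \<noteq> [] \<and> hd xs = Genesis \<and> sorted_wrt (\<lambda>x y. bslot x < bslot y) xs"

typedef 'b chain = "{xs :: 'b block list. valid_chain xs}" morphisms blocks Abs_chain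
  by (rule exI[of _ "[Genesis]"]) (simp add: valid_chain_def)

definition genesis_chain :: "'b chain" where
  "genesis_chain = Abs_chain [Genesis]"

definition cslot :: "'b chain \<Rightarrow> int" where
  "cslot ch = bslot (last (blocks ch))"

definition chain_prefix :: "'b chain \<Rightarrow> 'b chain \<Rightarrow> bool" (infix "\<preceq>\<^sub>c" 50) where
  "ch \<preceq>\<^sub>c ch' \<longleftrightarrow> prefix (blocks ch) (blocks ch')"

definition conflicting :: "'b chain \<Rightarrow> 'b chain \<Rightarrow> bool" where
  "conflicting ch ch' \<longleftrightarrow> \<not> ch \<preceq>\<^sub>c ch' \<and> \<not> ch' \<preceq>\<^sub>c ch"

type_synonym 'b checkpoint = "'b chain \<times> int"

type_synonym 'b ffg_vote = "'b checkpoint \<times> 'b checkpoint"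

definition valid_ffg :: "'b ffg_vote \<Rightarrow> bool" where
  "valid_ffg F \<longleftrightarrow> snd (fst F) < snd (snd F) \<and> fst (fst F) \<preceq>\<^sub>c fst (snd F)"

datatype ('v, 'b, 'x) message = VOTE 'v "'b ffg_vote" 'x | OTHER 'v 'x

section \<open>Justification and finalization (validators = the finite type 'v, n = card (UNIV :: 'v set))\<close>

inductive justified :: "('v::finite, 'b, 'x) message set \<Rightarrow> 'b checkpoint \<Rightarrow> bool"
  for V :: "('v, 'b, 'x) message set" where
  genesis: "justified V (genesis_chain, 0)"
| votes: "\<lbrakk> real (card W) \<ge> 2 * real (card (UNIV :: 'v set)) / 3;
            \<forall>v\<in>W. \<exists>S T x. VOTE v (S, T) x \<in> V \<and> valid_ffg (S, T) \<and> justified V S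
                    \<and> fst S \<preceq>\<^sub>c fst C \<and> fst C \<preceq>\<^sub>c fst T \<and> snd T = snd C \<rbrakk>
          \<Longrightarrow> justified V C"

definition finalized :: "('v::finite, 'b, 'x) message set \<Rightarrow> 'b checkpoint \<Rightarrow> bool" where
  "finalized V C \<longleftrightarrow> C = (genesis_chain, 0) \<or>
     (justified V C \<and>
      (\<exists>W :: 'v set. real (card W) \<ge> 2 * real (card (UNIV :: 'v set)) / 3 \<and>
         (\<forall>v\<in>W. \<exists>T x. VOTE v (C, T) x \<in> V \<and> valid_ffg (C, T) \<and> snd T = snd C + 1)))"

definition finalized_chain :: "('v::finite, 'b, 'x) message set \<Rightarrow> 'b chain \<Rightarrow> bool" where
  "finalized_chain V ch \<longleftrightarrow> (\<exists>C. finalized V C \<and> ch \<preceq>\<^sub>c fst C)"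

definition cp_le :: "'b checkpoint \<Rightarrow> 'b checkpoint \<Rightarrow> bool" where
  "cp_le C C' \<longleftrightarrow> snd C < snd C' \<or> (snd C = snd C' \<and> cslot (fst C) \<le> cslot (fst C'))"

definition cp_less :: "'b checkpoint \<Rightarrow> 'b checkpoint \<Rightarrow> bool" where
  "cp_less C C' \<longleftrightarrow> cp_le C C' \<and> \<not> cp_le C' C"

text \<open>Two distinct FFG votes C1->C2 and C3->C4 (of the same validator) violate E1 or E2.\<close>
definition slashable :: "'b ffg_vote \<Rightarrow> 'b ffg_vote \<Rightarrow> bool" where
  "slashable F F' \<longleftrightarrow> F \<noteq> F' \<and>
     (snd (snd F) = snd (snd F')
      \<or> (cp_less (fst F') (fst F) \<and> snd (snd F) < snd (snd F')))"

definition slashing_evidence :: "('v, 'b, 'x) message set \<Rightarrow> 'v \<Rightarrow> bool" where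
  "slashing_evidence M v \<longleftrightarrow>
     (\<exists>F F' x x'. VOTE v F x \<in> M \<and> VOTE v F' x' \<in> M \<and> slashable F F')"

text \<open>An execution: sent r = messages sent in round r; honest r v = v honest in round r;
  output r v = chain chi^fin output by v at round r; slot_of r = slot of round r.\<close>

definition global_view :: "(nat \<Rightarrow> ('v, 'b, 'x) message set) \<Rightarrow> nat \<Rightarrow> ('v, 'b, 'x) message set" where
  "global_view sent r = (\<Union>r'\<in>{..r}. sent r')"

definition all_msgs :: "(nat \<Rightarrow> ('v, 'b, 'x) message set) \<Rightarrow> ('v, 'b, 'x) message set" where
  "all_msgs sent = (\<Union>r. sent r)"

definition honest_ffg_vote ::
  "(nat \<Rightarrow> ('v, 'b, 'x) message set) \<Rightarrow> (nat \<Rightarrow> 'v \<Rightarrow> bool) \<Rightarrow> 'v \<Rightarrow> nat \<Rightarrow> 'b ffg_vote \<Rightarrow> bool" where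
  "honest_ffg_vote sent honest v r F \<longleftrightarrow> honest r v \<and> (\<exists>x. VOTE v F x \<in> sent r)"

definition ffg_voting_rule ::
  "(nat \<Rightarrow> ('v, 'b, 'x) message set) \<Rightarrow> (nat \<Rightarrow> 'v \<Rightarrow> bool) \<Rightarrow> (nat \<Rightarrow> int) \<Rightarrow> bool" where
  "ffg_voting_rule sent honest slot_of \<longleftrightarrow>
     (\<forall>v r r' F F'. honest_ffg_vote sent honest v r F \<longrightarrow> honest_ffg_vote sent honest v r' F' \<longrightarrow>
         slot_of r = slot_of r' \<longrightarrow> F = F')
   \<and> (\<forall>v r F. honest_ffg_vote sent honest v r F \<longrightarrow> snd (snd F) = slot_of r)
   \<and> (\<forall>v r r' F F'. honest_ffg_vote sent honest v r F \<longrightarrow> honest_ffg_vote sent honest v r' F' \<longrightarrow>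
         slot_of r \<le> slot_of r' \<longrightarrow> cp_le (fst F) (fst F'))"

definition outputs_finalized ::
  "(nat \<Rightarrow> ('v::finite, 'b, 'x) message set) \<Rightarrow> (nat \<Rightarrow> 'v \<Rightarrow> bool) \<Rightarrow> (nat \<Rightarrow> 'v \<Rightarrow> 'b chain) \<Rightarrow> bool" where
  "outputs_finalized sent honest output \<longleftrightarrow>
     (\<forall>r v. honest r v \<longrightarrow> finalized_chain (global_view sent r) (output r v))"

definition safety_violation ::
  "(nat \<Rightarrow> 'v \<Rightarrow> bool) \<Rightarrow> (nat \<Rightarrow> 'v \<Rightarrow> 'b chain) \<Rightarrow> bool" where
  "safety_violation honest output \<longleftrightarrow>
     (\<exists>r r' i j. honest r i \<and> honest r' j \<and> conflicting (output r i) (output r' j))"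

definition accountable ::
  "(nat \<Rightarrow> ('v, 'b, 'x) message set) \<Rightarrow> (nat \<Rightarrow> 'v \<Rightarrow> bool) \<Rightarrow> (nat \<Rightarrow> 'v \<Rightarrow> 'b chain) \<Rightarrow> real \<Rightarrow> bool" where
  "accountable sent honest output f \<longleftrightarrow>
     (safety_violation honest output \<longrightarrow>
        (\<exists>D. real (card D) \<ge> f \<and> (\<forall>v\<in>D. slashing_evidence (all_msgs sent) v)))
   \<and> (\<forall>v. slashing_evidence (all_msgs sent) v \<longrightarrow> \<not> (\<forall>r. honest r v))"

end

theory Submission
  imports Defs
begin

lemma cp_trans: "a \<preceq>\<^sub>c b \<Longrightarrow> b \<preceq>\<^sub>c c \<Longrightarrow> a \<preceq>\<^sub>c c"
  unfolding chain_prefix_def using prefix_order.trans by blast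

lemma cp_same: "a \<preceq>\<^sub>c c \<Longrightarrow> b \<preceq>\<^sub>c c \<Longrightarrow> a \<preceq>\<^sub>c b \<or> b \<preceq>\<^sub>c a"
  unfolding chain_prefix_def using prefix_same_cases by blast

lemma genesis_prefix: "genesis_chain \<preceq>\<^sub>c ch"
proof -
  have b: "blocks (genesis_chain :: 'a chain) = [Genesis]"
    unfolding genesis_chain_def by (rule Abs_chain_inverse) (simp add: valid_chain_def)
  have "valid_chain (blocks ch)" using blocks by blast
  then obtain ys where "blocks ch = Genesis # ys"
    unfolding valid_chain_def by (cases "blocks ch") auto
  then show ?thesis unfolding chain_prefix_def b by simp
qed

lemma strict_slot:
  assumes "a \<preceq>\<^sub>c b" "a \<noteq> b" shows "cslot a < cslot b"
proof -
  have va: "valid_chain (blocks a)" and vb: "valid_chain (blocks b)" using blocks by blast+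
  obtain zs where ys: "blocks b = blocks a @ zs" using assms(1) unfolding chain_prefix_def prefix_def by blast
  have "zs \<noteq> []" using ys assms(2) blocks_inject by fastforce
  have ne: "blocks a \<noteq> []" using va unfolding valid_chain_def by simp
  have "sorted_wrt (\<lambda>x y. bslot x < bslot y) (blocks a @ zs)" using vb ys unfolding valid_chain_def by simp
  then have "\<forall>x\<in>set (blocks a). \<forall>y\<in>set zs. bslot x < bslot y" unfolding sorted_wrt_append by blast
  moreover have "last (blocks a) \<in> set (blocks a)" using ne by simp
  moreover have "last zs \<in> set zs" using \<open>zs \<noteq> []\<close> by simp
  moreover have "last (blocks b) = last zs" using ys \<open>zs \<noteq> []\<close> by simp
  ultimately show ?thesis unfolding cslot_def by simp
qed

lemma card_pos: "0 < 2 * real (card (UNIV :: 'v::finite set)) / 3"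
proof -
  have "0 < card (UNIV :: 'v set)" by (rule finite_UNIV_card_ge_0) simp
  then show ?thesis by simp
qed

lemma justified_nonneg: "justified V C \<Longrightarrow> snd C \<ge> 0"
proof (induction rule: justified.induct)
  case genesis then show ?case by simp
next
  case (votes W C)
  have "card W > 0" using votes(1) card_pos[where 'v='a] by linarith
  then have "W \<noteq> {}" by auto
  then obtain v where "v \<in> W" by blast
  then have "\<exists>S T x. VOTE v (S, T) x \<in> V \<and> valid_ffg (S, T) \<and> (justified V S \<and> 0 \<le> snd S)
     \<and> fst S \<preceq>\<^sub>c fst C \<and> fst C \<preceq>\<^sub>c fst T \<and> snd T = snd C" using votes(2) by (rule bspec[rotated])
  then obtain S T x where "VOTE v (S, T) x \<in> V" "valid_ffg (S, T)" "0 \<le> snd S" "snd T = snd C" by blast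
  then show ?case unfolding valid_ffg_def by simp
qed

lemma justified_mono:
  assumes sub: "V \<subseteq> V'" shows "justified V C \<Longrightarrow> justified V' C"
proof (induction rule: justified.induct)
  case genesis show ?case by (rule justified.genesis)
next
  case (votes W C)
  have "\<forall>v\<in>W. \<exists>S T x. VOTE v (S, T) x \<in> V' \<and> valid_ffg (S, T) \<and> justified V' S
                    \<and> fst S \<preceq>\<^sub>c fst C \<and> fst C \<preceq>\<^sub>c fst T \<and> snd T = snd C"
  proof
    fix v assume "v \<in> W"
    then obtain S T x where h: "VOTE v (S, T) x \<in> V" "valid_ffg (S, T)" "justified V' S"
       "fst S \<preceq>\<^sub>c fst C" "fst C \<preceq>\<^sub>c fst T" "snd T = snd C"
      using votes(2) by blast
    have "VOTE v (S, T) x \<in> V'" using h(1) sub by blast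
    then show "\<exists>S T x. VOTE v (S, T) x \<in> V' \<and> valid_ffg (S, T) \<and> justified V' S
                    \<and> fst S \<preceq>\<^sub>c fst C \<and> fst C \<preceq>\<^sub>c fst T \<and> snd T = snd C"
      using h by blast
  qed
  then show ?case by (rule justified.votes[OF votes(1)])
qed

lemma finalized_mono: assumes "finalized V C" "V \<subseteq> V'" shows "finalized V' C"
proof (cases "C = (genesis_chain, 0)")
  case True then show ?thesis unfolding finalized_def by simp
next
  case False
  then obtain W where "justified V C" "real (card W) \<ge> 2 * real (card (UNIV :: 'a set)) / 3"
     "\<forall>v\<in>W. \<exists>T x. VOTE v (C, T) x \<in> V \<and> valid_ffg (C, T) \<and> snd T = snd C + 1"
    using assms(1) unfolding finalized_def by blast
  moreover have "justified V' C" using calculation(1) justified_mono[OF assms(2)] by blast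
  ultimately show ?thesis unfolding finalized_def using assms(2) by blast
qed

lemma inter_card:
  fixes W1 W2 :: "'v::finite set"
  assumes "real (card W1) \<ge> 2 * real (card (UNIV :: 'v set)) / 3"
      "real (card W2) \<ge> 2 * real (card (UNIV :: 'v set)) / 3"
  shows "real (card (W1 \<inter> W2)) \<ge> real (card (UNIV :: 'v set)) / 3"
proof -
  have "card W1 + card W2 = card (W1 \<union> W2) + card (W1 \<inter> W2)" by (rule card_Un_Int) auto
  moreover have "card (W1 \<union> W2) \<le> card (UNIV :: 'v set)" by (rule card_mono) auto
  ultimately show ?thesis using assms by linarith
qed

lemma equal_epoch:
  fixes M :: "('v::finite, 'b, 'x) message set"
  assumes "justified M A" "justified M B" "snd A = snd B" "conflicting (fst A) (fst B)"
  shows "\<exists>D. real (card D) \<ge> real (card (UNIV :: 'v set)) / 3 \<and> (\<forall>v\<in>D. slashing_evidence M v)"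
proof -
  have nA: "fst A \<noteq> genesis_chain" using assms(4) genesis_prefix unfolding conflicting_def by metis
  have nB: "fst B \<noteq> genesis_chain" using assms(4) genesis_prefix unfolding conflicting_def by metis
  obtain W1 where W1: "real (card W1) \<ge> 2 * real (card (UNIV :: 'v set)) / 3"
    "\<forall>v\<in>W1. \<exists>S T x. VOTE v (S, T) x \<in> M \<and> valid_ffg (S, T) \<and> justified M S
                    \<and> fst S \<preceq>\<^sub>c fst A \<and> fst A \<preceq>\<^sub>c fst T \<and> snd T = snd A"
    using assms(1) nA by (cases rule: justified.cases) auto
  obtain W2 where W2: "real (card W2) \<ge> 2 * real (card (UNIV :: 'v set)) / 3"
    "\<forall>v\<in>W2. \<exists>S T x. VOTE v (S, T) x \<in> M \<and> valid_ffg (S, T) \<and> justified M S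
                    \<and> fst S \<preceq>\<^sub>c fst B \<and> fst B \<preceq>\<^sub>c fst T \<and> snd T = snd B"
    using assms(2) nB by (cases rule: justified.cases) auto
  have "\<forall>v\<in>W1 \<inter> W2. slashing_evidence M v"
  proof
    fix v assume "v \<in> W1 \<inter> W2"
    then obtain S T x S' T' x' where a: "VOTE v (S, T) x \<in> M" "fst A \<preceq>\<^sub>c fst T" "snd T = snd A"
      and b: "VOTE v (S', T') x' \<in> M" "fst B \<preceq>\<^sub>c fst T'" "snd T' = snd B"
      using W1(2) W2(2) by blast
    have "(S, T) \<noteq> (S', T')"
      using a b assms(4) cp_same unfolding conflicting_def by blast
    then have "slashable (S, T) (S', T')" unfolding slashable_def using a b assms(3) by simp
    then show "slashing_evidence M v" unfolding slashing_evidence_def using a b by blast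
  qed
  then show ?thesis using inter_card[OF W1(1) W2(1)] by blast
qed

lemma key:
  fixes M :: "('v::finite, 'b, 'x) message set"
  assumes j1: "justified M C1"
    and W1: "real (card W1) \<ge> 2 * real (card (UNIV :: 'v set)) / 3"
    and W1v: "\<forall>v\<in>W1. \<exists>T x. VOTE v (C1, T) x \<in> M \<and> valid_ffg (C1, T) \<and> snd T = snd C1 + 1"
  shows "justified M C \<Longrightarrow> snd C1 < snd C \<Longrightarrow> \<not> fst C1 \<preceq>\<^sub>c fst C \<Longrightarrow>
    \<exists>D. real (card D) \<ge> real (card (UNIV :: 'v set)) / 3 \<and> (\<forall>v\<in>D. slashing_evidence M v)"
proof (induction "nat (snd C - snd C1)" arbitrary: C rule: less_induct)
  case less
  have "snd C1 \<ge> 0" using justified_nonneg j1 by blast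
  then have nC: "C \<noteq> (genesis_chain, 0)" using less.prems(2) by auto
  obtain W where W: "real (card W) \<ge> 2 * real (card (UNIV :: 'v set)) / 3"
    "\<forall>v\<in>W. \<exists>S T x. VOTE v (S, T) x \<in> M \<and> valid_ffg (S, T) \<and> justified M S
                    \<and> fst S \<preceq>\<^sub>c fst C \<and> fst C \<preceq>\<^sub>c fst T \<and> snd T = snd C"
    using less.prems(1) nC by (cases rule: justified.cases) auto
  show ?case
  proof (cases "\<exists>S. justified M S \<and> snd S < snd C \<and>
       ((snd C1 < snd S \<and> \<not> fst C1 \<preceq>\<^sub>c fst S) \<or> (snd S = snd C1 \<and> conflicting (fst S) (fst C1)))")
    case True
    then obtain S where S: "justified M S" "snd S < snd C"
      "(snd C1 < snd S \<and> \<not> fst C1 \<preceq>\<^sub>c fst S) \<or> (snd S = snd C1 \<and> conflicting (fst S) (fst C1))"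
      by blast
    show ?thesis
    proof (cases "snd C1 < snd S \<and> \<not> fst C1 \<preceq>\<^sub>c fst S")
      case True
      have "nat (snd S - snd C1) < nat (snd C - snd C1)" using S(2) True by auto
      then show ?thesis using less.hyps S(1) True by blast
    next
      case False
      then show ?thesis using S equal_epoch[OF S(1) j1] by auto
    qed
  next
    case False
    have "\<forall>v\<in>W1 \<inter> W. slashing_evidence M v"
    proof
      fix v assume "v \<in> W1 \<inter> W"
      then obtain S T x T' x' where a: "VOTE v (S, T) x \<in> M" "valid_ffg (S, T)" "justified M S"
          "fst S \<preceq>\<^sub>c fst C" "fst C \<preceq>\<^sub>c fst T" "snd T = snd C"
        and b: "VOTE v (C1, T') x' \<in> M" "snd T' = snd C1 + 1"
        using W1v W(2) by blast
      have sl: "snd S < snd C" using a(2,6) unfolding valid_ffg_def by simp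
      have ne: "(C1, T') \<noteq> (S, T)" using a(4) less.prems(3) by auto
      have le: "snd S \<le> snd C1"
      proof (rule ccontr)
        assume "\<not> ?thesis"
        then have "fst C1 \<preceq>\<^sub>c fst S" using False a(3) sl by auto
        then show False using a(4) less.prems(3) cp_trans by blast
      qed
      have cpl: "cp_less S C1"
      proof (cases "snd S < snd C1")
        case True then show ?thesis unfolding cp_less_def cp_le_def by auto
      next
        case False
        then have eq: "snd S = snd C1" using le by simp
        then have nc: "\<not> conflicting (fst S) (fst C1)" using False a(3) sl \<open>\<not> (\<exists>S. _)\<close> by blast
        have n1: "\<not> fst C1 \<preceq>\<^sub>c fst S" using a(4) less.prems(3) cp_trans by blast
        then have "fst S \<preceq>\<^sub>c fst C1" using nc unfolding conflicting_def by blast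
        moreover have "fst S \<noteq> fst C1" using n1 unfolding chain_prefix_def by auto
        ultimately have "cslot (fst S) < cslot (fst C1)" by (rule strict_slot)
        then show ?thesis using eq unfolding cp_less_def cp_le_def by auto
      qed
      have "snd T' \<le> snd T" using b(2) a(6) less.prems(2) by simp
      then have "slashable (C1, T') (S, T)" unfolding slashable_def using ne cpl by auto
      then show "slashing_evidence M v" unfolding slashing_evidence_def using a b by blast
    qed
    then show ?thesis using inter_card[OF W1 W(1)] by blast
  qed
qed

theorem theorem4p4:
  fixes sent :: "nat \<Rightarrow> ('v::finite, 'b, 'x) message set"
    and honest :: "nat \<Rightarrow> 'v \<Rightarrow> bool"
    and outp :: "nat \<Rightarrow> 'v \<Rightarrow> 'b chain"
    and slot_of :: "nat \<Rightarrow> int"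
  assumes "mono slot_of"
    and "\<forall>r v. honest (Suc r) v \<longrightarrow> honest r v"
    and "ffg_voting_rule sent honest slot_of"
    and "outputs_finalized sent honest outp"
  shows "accountable sent honest outp (real (card (UNIV :: 'v set)) / 3)"
  unfolding accountable_def
proof (intro conjI impI allI)
  let ?M = "all_msgs sent"
  assume "safety_violation honest outp"
  then obtain r r' i j where h: "honest r i" "honest r' j" and cf: "conflicting (outp r i) (outp r' j)"
    unfolding safety_violation_def by blast
  have sub: "\<And>r. global_view sent r \<subseteq> ?M" unfolding global_view_def all_msgs_def by blast
  obtain C1 where C1: "finalized ?M C1" "outp r i \<preceq>\<^sub>c fst C1"
    using assms(4) h(1) finalized_mono[OF _ sub] unfolding outputs_finalized_def finalized_chain_def by blast
  obtain C2 where C2: "finalized ?M C2" "outp r' j \<preceq>\<^sub>c fst C2"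
    using assms(4) h(2) finalized_mono[OF _ sub] unfolding outputs_finalized_def finalized_chain_def by blast
  have cf2: "conflicting (fst C1) (fst C2)"
    using cf C1(2) C2(2) cp_same cp_trans unfolding conflicting_def by metis
  have g1: "C1 \<noteq> (genesis_chain, 0)" using cf2 genesis_prefix unfolding conflicting_def by fastforce
  have g2: "C2 \<noteq> (genesis_chain, 0)" using cf2 genesis_prefix unfolding conflicting_def by fastforce
  obtain W1 where F1: "justified ?M C1" "real (card W1) \<ge> 2 * real (card (UNIV :: 'v set)) / 3"
     "\<forall>v\<in>W1. \<exists>T x. VOTE v (C1, T) x \<in> ?M \<and> valid_ffg (C1, T) \<and> snd T = snd C1 + 1"
    using C1(1) g1 unfolding finalized_def by blast
  obtain W2 where F2: "justified ?M C2" "real (card W2) \<ge> 2 * real (card (UNIV :: 'v set)) / 3"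
     "\<forall>v\<in>W2. \<exists>T x. VOTE v (C2, T) x \<in> ?M \<and> valid_ffg (C2, T) \<and> snd T = snd C2 + 1"
    using C2(1) g2 unfolding finalized_def by blast
  consider "snd C1 = snd C2" | "snd C1 < snd C2" | "snd C2 < snd C1" by linarith
  then show "\<exists>D. real (card D) \<ge> real (card (UNIV :: 'v set)) / 3 \<and> (\<forall>v\<in>D. slashing_evidence ?M v)"
  proof cases
    case 1 then show ?thesis using equal_epoch[OF F1(1) F2(1) _ cf2] by blast
  next
    case 2 then show ?thesis using key[OF F1, of C2] F2(1) cf2 unfolding conflicting_def by blast
  next
    case 3 then show ?thesis using key[OF F2, of C1] F1(1) cf2 unfolding conflicting_def by blast
  qed
next
  fix v
  assume ev: "slashing_evidence (all_msgs sent) v"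
  show "\<not> (\<forall>r. honest r v)"
  proof
    assume hon: "\<forall>r. honest r v"
    obtain F F' x x' where e: "VOTE v F x \<in> all_msgs sent" "VOTE v F' x' \<in> all_msgs sent" "slashable F F'"
      using ev unfolding slashing_evidence_def by blast
    obtain r r' where "VOTE v F x \<in> sent r" "VOTE v F' x' \<in> sent r'"
      using e(1,2) unfolding all_msgs_def by blast
    then have hv: "honest_ffg_vote sent honest v r F" "honest_ffg_vote sent honest v r' F'"
      using hon unfolding honest_ffg_vote_def by blast+
    have R1: "\<And>r r' F F'. honest_ffg_vote sent honest v r F \<Longrightarrow> honest_ffg_vote sent honest v r' F' \<Longrightarrow>
         slot_of r = slot_of r' \<Longrightarrow> F = F'"
      and R2: "\<And>r F. honest_ffg_vote sent honest v r F \<Longrightarrow> snd (snd F) = slot_of r"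
      and R3: "\<And>r r' F F'. honest_ffg_vote sent honest v r F \<Longrightarrow> honest_ffg_vote sent honest v r' F' \<Longrightarrow>
         slot_of r \<le> slot_of r' \<Longrightarrow> cp_le (fst F) (fst F')"
      using assms(3) unfolding ffg_voting_rule_def by blast+
    have t: "snd (snd F) = slot_of r" "snd (snd F') = slot_of r'" using R2 hv by blast+
    show False
      using e(3) unfolding slashable_def
    proof (elim conjE disjE)
      assume "F \<noteq> F'" "snd (snd F) = snd (snd F')"
      then show False using R1[OF hv] t by simp
    next
      assume "F \<noteq> F'" "cp_less (fst F') (fst F)" "snd (snd F) < snd (snd F')"
      then show False using R3[OF hv] t unfolding cp_less_def by simp
    qed
  qed
qed

end
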